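(* Assume CAT (in the form stated in the context). Let $p\ge 2$ be a natural number and let $T\subseteq{}^{<\omega_1}p$ be a binarisable special Aronszajn tree. Then there is a colouring $c:T^{[2]}\to p+1=\{0,1,\dots,p\}$ such that for every subtree $S$ of $T$, the set $\{c(\{s,t\}):\{s,t\}\in S^{[2]}\}$ has at least $3$ elements.
   Context: Trees are subsets $T\subseteq{}^{<\omega_1}p$ (functions from countable ordinals into $p=\{0,\dots,p-1\}$) closed under initial segments, ordered by $s<_T t$ iff $t$ properly extends $s$; $\lg(s)$ denotes the domain (an ordinal) of $s$, and $s^\frown j$ is the one-point extension of $s$ by value $j$. $T$ is an Aronszajn tree if it is uncountable, every level is countable, and it has no uncountable chain. $T$ is special if it is a union of countably many antichains. For $s,t\in T$, the meet $s\wedge t$ is the longest common initial segment of $s$ and $t$. A subtree of $T$ is an uncountable subset $S\subseteq T$ closed under meets ($s,t\in S\Rightarrow s\wedge t\in S$). A subtree $S$ is binary if every node of $S$ has at most two distinct immediate successors in $S$ (i.e. elements of $S$ above it with no element of $S$ strictly in between). $T$ is binarisable if every subtree of $T$ contains a binary subtree. $T^{[2]}=\{\{s,t\}: s<_T t\}$, and for $S\subseteq T$, $S^{[2]}=\{\{s,t\}: s,t\in S,\ s<_T t\}$. Colouring Axiom for Trees (CAT), in the form used here: for every Aronszajn tree $T$, every subtree $S$ of $T$ (including $S=T$) and every partition $S=K_0\cup K_1$, there are an uncountable $X\subseteq S$ and $i<2$ such that $x\wedge y\in K_i$ for all distinct $x,y\in X$; and likewise for partitions of $S$ into any finite number of pieces.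 *)

theory Defs
  imports Main "HOL-Library.Countable_Set"
begin

text \<open>Countable ordinals are modelled by an abstract wellordered type 'o in which
every proper initial segment is countable and which is itself uncountable
(i.e. 'o is order-isomorphic to omega_1).  A node s of the full tree of
sequences of length less than omega_1 with values in p is a partial map
'o => nat option whose domain is an initial segment {..<a} (a = lg s) and
whose values lie in {0..<p}.\<close>

type_synonym 'o node = "'o \<Rightarrow> nat option"

definition seqs :: "nat \<Rightarrow> ('o::wellorder) node set" where
  "seqs p = {s. (\<exists>a. dom s = {..<a}) \<and> ran s \<subseteq> {..<p}}"

definition tless :: "('o::wellorder) node \<Rightarrow> 'o node \<Rightarrow> bool" where
  "tless s t \<longleftrightarrow> s \<subseteq>\<^sub>m t \<and> s \<noteq> t"

definition is_tree :: "nat \<Rightarrow> ('o::wellorder) node set \<Rightarrow> bool" where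
  "is_tree p T \<longleftrightarrow> T \<subseteq> seqs p \<and> (\<forall>t\<in>T. \<forall>a. t |` {..<a} \<in> T)"

definition aronszajn :: "nat \<Rightarrow> ('o::wellorder) node set \<Rightarrow> bool" where
  "aronszajn p T \<longleftrightarrow> is_tree p T \<and> uncountable T
     \<and> (\<forall>a. countable {t\<in>T. dom t = {..<a}})
     \<and> (\<forall>C\<subseteq>T. (\<forall>x\<in>C. \<forall>y\<in>C. x \<subseteq>\<^sub>m y \<or> y \<subseteq>\<^sub>m x) \<longrightarrow> countable C)"

definition antichain :: "('o::wellorder) node set \<Rightarrow> bool" where
  "antichain A \<longleftrightarrow> (\<forall>x\<in>A. \<forall>y\<in>A. \<not> tless x y)"

definition special :: "('o::wellorder) node set \<Rightarrow> bool" where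
  "special T \<longleftrightarrow> (\<exists>A :: nat \<Rightarrow> 'o node set. T = (\<Union>n. A n) \<and> (\<forall>n. antichain (A n)))"

definition meet :: "('o::wellorder) node \<Rightarrow> 'o node \<Rightarrow> 'o node" where
  "meet s t = s |` {x. \<forall>y\<le>x. s y \<noteq> None \<and> s y = t y}"

definition subtree :: "('o::wellorder) node set \<Rightarrow> 'o node set \<Rightarrow> bool" where
  "subtree T S \<longleftrightarrow> S \<subseteq> T \<and> uncountable S \<and> (\<forall>s\<in>S. \<forall>t\<in>S. meet s t \<in> S)"

definition imm_succs :: "('o::wellorder) node set \<Rightarrow> 'o node \<Rightarrow> 'o node set" where
  "imm_succs S s = {t\<in>S. tless s t \<and> \<not> (\<exists>u\<in>S. tless s u \<and> tless u t)}"

definition binary :: "('o::wellorder) node set \<Rightarrow> bool" where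
  "binary S \<longleftrightarrow> (\<forall>s\<in>S. finite (imm_succs S s) \<and> card (imm_succs S s) \<le> 2)"

definition binarisable :: "('o::wellorder) node set \<Rightarrow> bool" where
  "binarisable T \<longleftrightarrow> (\<forall>S. subtree T S \<longrightarrow> (\<exists>S'. subtree S S' \<and> binary S'))"

text \<open>Colouring Axiom for Trees, relative to the model 'o of omega_1, for all
Aronszajn trees of sequences into any finite q, and partitions into n pieces.\<close>
definition CAT :: "('o::wellorder) itself \<Rightarrow> bool" where
  "CAT _ \<longleftrightarrow> (\<forall>q (T :: 'o node set). aronszajn q T \<longrightarrow>
     (\<forall>S. (S = T \<or> subtree T S) \<longrightarrow>
       (\<forall>(n::nat) (K :: 'o node \<Rightarrow> nat). (\<forall>s\<in>S. K s < n) \<longrightarrow>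
          (\<exists>X\<subseteq>S. uncountable X \<and> (\<exists>i<n. \<forall>x\<in>X. \<forall>y\<in>X. x \<noteq> y \<longrightarrow> K (meet x y) = i)))))"

end

theory Submission
  imports Defs
begin

definition lg :: "('o::wellorder) node \<Rightarrow> 'o" where
  "lg s = (LEAST a. s a = None)"

lemma lg_dom:
  assumes "s \<in> seqs p" shows "dom s = {..<lg s}"
proof -
  obtain a where a: "dom s = {..<a}" using assms unfolding seqs_def by auto
  have "s a = None" using a by auto
  hence le: "lg s \<le> a" unfolding lg_def by (rule Least_le)
  have "s (lg s) = None" unfolding lg_def using \<open>s a = None\<close> by (rule LeastI)
  hence "\<not> lg s < a" using a by auto
  hence "lg s = a" using le by auto
  thus ?thesis using a by simp
qed

lemma comparable:
  assumes "a \<in> seqs p" "b \<in> seqs q" "a \<subseteq>\<^sub>m x" "b \<subseteq>\<^sub>m x"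
  shows "a \<subseteq>\<^sub>m b \<or> b \<subseteq>\<^sub>m a"
proof -
  have da: "dom a = {..<lg a}" and db: "dom b = {..<lg b}" using assms lg_dom by auto
  show ?thesis
  proof (cases "lg a \<le> lg b")
    case True
    have "a \<subseteq>\<^sub>m b" unfolding map_le_def
    proof
      fix z assume z: "z \<in> dom a"
      hence "z \<in> dom b" using da db True by auto
      thus "a z = b z" using z assms(3,4) unfolding map_le_def by auto
    qed
    thus ?thesis by simp
  next
    case False
    have "b \<subseteq>\<^sub>m a" unfolding map_le_def
    proof
      fix z assume z: "z \<in> dom b"
      hence "z \<in> dom a" using da db False by auto
      thus "b z = a z" using z assms(3,4) unfolding map_le_def by auto
    qed
    thus ?thesis by simp
  qed
qed

lemma meet_props:
  assumes u: "u \<in> seqs p" and v: "v \<in> seqs q" and nuv: "\<not> u \<subseteq>\<^sub>m v" and nvu: "\<not> v \<subseteq>\<^sub>m u"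
  shows "\<exists>\<alpha>. meet u v = u |` {..<\<alpha>} \<and> u \<alpha> \<noteq> None \<and> v \<alpha> \<noteq> None \<and> u \<alpha> \<noteq> v \<alpha>
     \<and> (\<forall>x<\<alpha>. u x = v x \<and> u x \<noteq> None)"
proof -
  have du: "dom u = {..<lg u}" and dv: "dom v = {..<lg v}" using u v lg_dom by auto
  have "u \<noteq> v" using nuv by auto
  then obtain d where "u d \<noteq> v d" by auto
  define \<alpha> where "\<alpha> = (LEAST x. u x \<noteq> v x)"
  have ua: "u \<alpha> \<noteq> v \<alpha>" unfolding \<alpha>_def using \<open>u d \<noteq> v d\<close> by (rule LeastI)
  have below: "u x = v x" if "x < \<alpha>" for x
    using that not_less_Least unfolding \<alpha>_def by blast
  have uS: "u \<alpha> \<noteq> None"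
  proof
    assume N: "u \<alpha> = None"
    have "u \<subseteq>\<^sub>m v" unfolding map_le_def
    proof
      fix z assume z: "z \<in> dom u"
      hence "z < lg u" using du by auto
      moreover have "\<not> \<alpha> < lg u" using N du by auto
      ultimately have "z < \<alpha>" by auto
      thus "u z = v z" using below by auto
    qed
    thus False using nuv by simp
  qed
  have vS: "v \<alpha> \<noteq> None"
  proof
    assume N: "v \<alpha> = None"
    have "v \<subseteq>\<^sub>m u" unfolding map_le_def
    proof
      fix z assume z: "z \<in> dom v"
      hence "z < lg v" using dv by auto
      moreover have "\<not> \<alpha> < lg v" using N dv by auto
      ultimately have "z < \<alpha>" by auto
      thus "v z = u z" using below by auto
    qed
    thus False using nvu by simp
  qed
  have "\<alpha> < lg u" using uS du by auto
  hence uNN: "u x \<noteq> None" if "x < \<alpha>" for x using that du by auto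
  have M: "{x. \<forall>y\<le>x. u y \<noteq> None \<and> u y = v y} = {..<\<alpha>}"
  proof (intro set_eqI iffI)
    fix x assume "x \<in> {x. \<forall>y\<le>x. u y \<noteq> None \<and> u y = v y}"
    hence "\<forall>y\<le>x. u y = v y" by auto
    thus "x \<in> {..<\<alpha>}" using ua by (metis lessThan_iff not_le)
  next
    fix x assume "x \<in> {..<\<alpha>}"
    thus "x \<in> {x. \<forall>y\<le>x. u y \<noteq> None \<and> u y = v y}" using below uNN by auto
  qed
  show ?thesis
    by (rule exI[of _ \<alpha>]) (use M ua uS vS below uNN in \<open>auto simp: meet_def\<close>)
qed

lemma meet_derived:
  assumes u: "u \<in> seqs p" and v: "v \<in> seqs q" and nuv: "\<not> u \<subseteq>\<^sub>m v" and nvu: "\<not> v \<subseteq>\<^sub>m u"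
  shows "tless (meet u v) u" "tless (meet u v) v"
    "u (lg (meet u v)) \<noteq> None" "v (lg (meet u v)) \<noteq> None" "u (lg (meet u v)) \<noteq> v (lg (meet u v))"
    "\<And>y. y \<in> seqs r \<Longrightarrow> y \<subseteq>\<^sub>m u \<Longrightarrow> y \<subseteq>\<^sub>m v \<Longrightarrow> y \<subseteq>\<^sub>m meet u v"
proof -
  obtain \<alpha> where m: "meet u v = u |` {..<\<alpha>}" and ua: "u \<alpha> \<noteq> None" and va: "v \<alpha> \<noteq> None"
    and d: "u \<alpha> \<noteq> v \<alpha>" and b: "\<forall>x<\<alpha>. u x = v x \<and> u x \<noteq> None"
    using meet_props[OF assms] by blast
  have dm: "dom (meet u v) = {..<\<alpha>}"
  proof (intro set_eqI iffI)
    fix x assume "x \<in> dom (meet u v)" thus "x \<in> {..<\<alpha>}" using m by (auto simp: restrict_map_def split: if_splits)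
  next
    fix x assume "x \<in> {..<\<alpha>}" thus "x \<in> dom (meet u v)" using m b by auto
  qed
  have "meet u v \<in> seqs 0 \<or> True" by simp
  have lgm: "lg (meet u v) = \<alpha>"
  proof -
    have "meet u v \<alpha> = None" using m by simp
    hence "lg (meet u v) \<le> \<alpha>" unfolding lg_def by (rule Least_le)
    moreover have "meet u v (lg (meet u v)) = None" unfolding lg_def
      using \<open>meet u v \<alpha> = None\<close> by (rule LeastI)
    ultimately show ?thesis using dm by (metis domIff lessThan_iff order_le_less)
  qed
  have le1: "meet u v \<subseteq>\<^sub>m u" using m by (auto simp: map_le_def)
  have le2: "meet u v \<subseteq>\<^sub>m v" using m b by (auto simp: map_le_def)
  have n1: "meet u v \<noteq> u" using m ua by (metis lessThan_iff order_less_irrefl restrict_out)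
  have n2: "meet u v \<noteq> v" using m va by (metis lessThan_iff order_less_irrefl restrict_out)
  show "tless (meet u v) u" "tless (meet u v) v" using le1 le2 n1 n2 by (auto simp: tless_def)
  show "u (lg (meet u v)) \<noteq> None" "v (lg (meet u v)) \<noteq> None" "u (lg (meet u v)) \<noteq> v (lg (meet u v))"
    using lgm ua va d by auto
  fix y assume y: "y \<in> seqs r" "y \<subseteq>\<^sub>m u" "y \<subseteq>\<^sub>m v"
  have dy: "dom y = {..<lg y}" using y lg_dom by auto
  have "lg y \<le> \<alpha>"
  proof (rule ccontr)
    assume "\<not> lg y \<le> \<alpha>"
    hence "\<alpha> \<in> dom y" using dy by auto
    hence "u \<alpha> = y \<alpha>" "v \<alpha> = y \<alpha>" using y(2,3) unfolding map_le_def by auto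
    thus False using d by simp
  qed
  show "y \<subseteq>\<^sub>m meet u v" unfolding map_le_def
  proof
    fix z assume z: "z \<in> dom y"
    hence "z < \<alpha>" using dy \<open>lg y \<le> \<alpha>\<close> by auto
    thus "y z = meet u v z" using m y(2) z unfolding map_le_def by auto
  qed
qed

lemma bounded:
  fixes B :: "('o::wellorder) set"
  assumes "countable B" "uncountable (UNIV :: 'o set)" "\<forall>a::'o. countable {..<a}"
  shows "\<exists>\<alpha>. \<forall>b\<in>B. b < \<alpha>"
proof (rule ccontr)
  assume "\<not> ?thesis"
  hence "\<forall>\<alpha>. \<exists>b\<in>B. \<alpha> \<le> b" by (auto simp: not_less)
  hence "UNIV \<subseteq> (\<Union>b\<in>B. insert b {..<b})" by (auto simp: order_le_less)
  moreover have "countable (\<Union>b\<in>B. insert b {..<b})" using assms by auto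
  ultimately show False using assms(2) countable_subset by blast
qed

lemma not_chain:
  fixes T :: "('o::wellorder) node set"
  assumes om: "uncountable (UNIV :: 'o set)" and segs: "\<forall>a::'o. countable {..<a}"
    and aron: "aronszajn p T" and XT: "X \<subseteq> T" and yT: "y \<in> T"
    and unc: "uncountable {x\<in>X. y \<subseteq>\<^sub>m x}"
  shows "\<exists>y1 y2. y1 \<in> T \<and> y2 \<in> T \<and> uncountable {x\<in>X. y1 \<subseteq>\<^sub>m x} \<and> uncountable {x\<in>X. y2 \<subseteq>\<^sub>m x}
     \<and> \<not> y1 \<subseteq>\<^sub>m y2 \<and> \<not> y2 \<subseteq>\<^sub>m y1 \<and> y \<subseteq>\<^sub>m y1 \<and> y \<subseteq>\<^sub>m y2"
proof -
  have Tseq: "T \<subseteq> seqs p" and Tres: "\<forall>t\<in>T. \<forall>a. t |` {..<a} \<in> T"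
    and lev: "\<forall>a. countable {t\<in>T. dom t = {..<a}}"
    and ch: "\<forall>C\<subseteq>T. (\<forall>x\<in>C. \<forall>y\<in>C. x \<subseteq>\<^sub>m y \<or> y \<subseteq>\<^sub>m x) \<longrightarrow> countable C"
    using aron unfolding aronszajn_def is_tree_def by auto
  define X' where "X' = {x\<in>X. y \<subseteq>\<^sub>m x}"
  define C where "C = {z\<in>T. uncountable {x\<in>X'. z \<subseteq>\<^sub>m x}}"
  have "\<not> (\<forall>z1\<in>C. \<forall>z2\<in>C. z1 \<subseteq>\<^sub>m z2 \<or> z2 \<subseteq>\<^sub>m z1)"
  proof
    assume "\<forall>z1\<in>C. \<forall>z2\<in>C. z1 \<subseteq>\<^sub>m z2 \<or> z2 \<subseteq>\<^sub>m z1"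
    have "C \<subseteq> T" unfolding C_def by blast
    hence "countable C" using ch \<open>\<forall>z1\<in>C. \<forall>z2\<in>C. z1 \<subseteq>\<^sub>m z2 \<or> z2 \<subseteq>\<^sub>m z1\<close> by blast
    hence "countable (lg ` C)" by auto
    then obtain \<alpha> where \<alpha>: "\<forall>b\<in>lg ` C. b < \<alpha>" using bounded[OF _ om segs] by blast
    have sub: "X' \<subseteq> (\<Union>\<beta>\<in>{..<\<alpha>}. {t\<in>T. dom t = {..<\<beta>}}) \<union>
                 (\<Union>w\<in>{t\<in>T. dom t = {..<\<alpha>}}. {x\<in>X'. w \<subseteq>\<^sub>m x})"
    proof
      fix x assume xX: "x \<in> X'"
      hence xT: "x \<in> T" using X'_def XT by auto
      hence dx: "dom x = {..<lg x}" using Tseq lg_dom by blast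
      show "x \<in> (\<Union>\<beta>\<in>{..<\<alpha>}. {t\<in>T. dom t = {..<\<beta>}}) \<union>
                 (\<Union>w\<in>{t\<in>T. dom t = {..<\<alpha>}}. {x\<in>X'. w \<subseteq>\<^sub>m x})"
      proof (cases "lg x < \<alpha>")
        case True thus ?thesis using xT dx by auto
      next
        case False
        define w where "w = x |` {..<\<alpha>}"
        have "w \<in> T" using Tres xT w_def by auto
        moreover have "dom w = {..<\<alpha>}" using dx False w_def by auto
        moreover have "w \<subseteq>\<^sub>m x" using w_def by (auto simp: map_le_def)
        ultimately show ?thesis using xX by auto
      qed
    qed
    have "countable (\<Union>\<beta>\<in>{..<\<alpha>}. {t\<in>T. dom t = {..<\<beta>}})" using segs lev by auto
    moreover have "countable (\<Union>w\<in>{t\<in>T. dom t = {..<\<alpha>}}. {x\<in>X'. w \<subseteq>\<^sub>m x})"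
    proof (rule countable_UN)
      show "countable {t\<in>T. dom t = {..<\<alpha>}}" using lev by auto
    next
      fix w assume w: "w \<in> {t\<in>T. dom t = {..<\<alpha>}}"
      hence "lg w = \<alpha>"
      proof -
        have "w \<in> seqs p" using w Tseq by auto
        hence "{..<lg w} = {..<\<alpha>}" using w lg_dom by fastforce
        thus ?thesis by (metis lessThan_eq_iff)
      qed
      hence "w \<notin> C" using \<alpha> by auto
      thus "countable {x\<in>X'. w \<subseteq>\<^sub>m x}" using w C_def by auto
    qed
    ultimately have "countable X'" using sub countable_subset by blast
    thus False using unc X'_def by simp
  qed
  then obtain z1 z2 where z: "z1 \<in> C" "z2 \<in> C" "\<not> z1 \<subseteq>\<^sub>m z2" "\<not> z2 \<subseteq>\<^sub>m z1" by blast
  have yseq: "y \<in> seqs p" using yT Tseq by auto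
  have z1s: "z1 \<in> seqs p" "z2 \<in> seqs p" using z C_def Tseq by auto
  have u1: "uncountable {x\<in>X'. z1 \<subseteq>\<^sub>m x}" and u2: "uncountable {x\<in>X'. z2 \<subseteq>\<^sub>m x}"
    using z(1,2) C_def by blast+
  have "{x\<in>X'. z1 \<subseteq>\<^sub>m x} \<noteq> {}" "{x\<in>X'. z2 \<subseteq>\<^sub>m x} \<noteq> {}"
    using u1 u2 countable_empty by metis+
  then obtain x1 x2 where x1: "x1 \<in> X'" "z1 \<subseteq>\<^sub>m x1" and x2: "x2 \<in> X'" "z2 \<subseteq>\<^sub>m x2" by blast
  have yx: "y \<subseteq>\<^sub>m x1" "y \<subseteq>\<^sub>m x2" using x1 x2 X'_def by auto
  have "y \<subseteq>\<^sub>m z1"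
  proof -
    have "y \<subseteq>\<^sub>m z1 \<or> z1 \<subseteq>\<^sub>m y" using comparable[OF yseq z1s(1) yx(1) x1(2)] .
    moreover have "\<not> z1 \<subseteq>\<^sub>m y"
    proof
      assume "z1 \<subseteq>\<^sub>m y"
      hence "z1 \<subseteq>\<^sub>m x2" using yx(2) map_le_trans by blast
      thus False using comparable[OF z1s(1) z1s(2) _ x2(2)] z by blast
    qed
    ultimately show ?thesis by blast
  qed
  moreover have "y \<subseteq>\<^sub>m z2"
  proof -
    have "y \<subseteq>\<^sub>m z2 \<or> z2 \<subseteq>\<^sub>m y" using comparable[OF yseq z1s(2) yx(2) x2(2)] .
    moreover have "\<not> z2 \<subseteq>\<^sub>m y"
    proof
      assume "z2 \<subseteq>\<^sub>m y"
      hence "z2 \<subseteq>\<^sub>m x1" using yx(1) map_le_trans by blast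
      thus False using comparable[OF z1s(2) z1s(1) _ x1(2)] z by blast
    qed
    ultimately show ?thesis by blast
  qed
  moreover have "uncountable {x\<in>X. z1 \<subseteq>\<^sub>m x}"
    using z(1) C_def X'_def countable_subset[of "{x\<in>X'. z1 \<subseteq>\<^sub>m x}" "{x\<in>X. z1 \<subseteq>\<^sub>m x}"] by auto
  moreover have "uncountable {x\<in>X. z2 \<subseteq>\<^sub>m x}"
    using z(2) C_def X'_def countable_subset[of "{x\<in>X'. z2 \<subseteq>\<^sub>m x}" "{x\<in>X. z2 \<subseteq>\<^sub>m x}"] by auto
  ultimately show ?thesis using z C_def by blast
qed

lemma split_node:
  fixes T :: "('o::wellorder) node set"
  assumes om: "uncountable (UNIV :: 'o set)" and segs: "\<forall>a::'o. countable {..<a}"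
    and aron: "aronszajn p T" and XT: "X \<subseteq> T" and meetT: "\<forall>u\<in>X. \<forall>v\<in>X. meet u v \<in> T"
    and yT: "y \<in> T" and unc: "uncountable {x\<in>X. y \<subseteq>\<^sub>m x}"
  shows "\<exists>u\<in>X. \<exists>v\<in>X. \<not> u \<subseteq>\<^sub>m v \<and> \<not> v \<subseteq>\<^sub>m u \<and> y \<subseteq>\<^sub>m meet u v \<and>
           (\<exists>y1. y1 \<in> T \<and> uncountable {x\<in>X. y1 \<subseteq>\<^sub>m x} \<and> tless (meet u v) y1)"
proof -
  have Tseq: "T \<subseteq> seqs p" using aron unfolding aronszajn_def is_tree_def by auto
  obtain y1 y2 where y: "y1 \<in> T" "y2 \<in> T" "uncountable {x\<in>X. y1 \<subseteq>\<^sub>m x}" "uncountable {x\<in>X. y2 \<subseteq>\<^sub>m x}"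
     "\<not> y1 \<subseteq>\<^sub>m y2" "\<not> y2 \<subseteq>\<^sub>m y1" "y \<subseteq>\<^sub>m y1" "y \<subseteq>\<^sub>m y2"
    using not_chain[OF om segs aron XT yT unc] by blast
  have "{x\<in>X. y1 \<subseteq>\<^sub>m x} \<noteq> {}" "{x\<in>X. y2 \<subseteq>\<^sub>m x} \<noteq> {}"
    using y(3,4) countable_empty by metis+
  then obtain u v where u: "u \<in> X" "y1 \<subseteq>\<^sub>m u" and v: "v \<in> X" "y2 \<subseteq>\<^sub>m v" by blast
  have ys: "y1 \<in> seqs p" "y2 \<in> seqs p" "y \<in> seqs p" using y yT Tseq by auto
  have us: "u \<in> seqs p" "v \<in> seqs p" using u v XT Tseq by auto
  have nuv: "\<not> u \<subseteq>\<^sub>m v"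
  proof
    assume "u \<subseteq>\<^sub>m v" hence "y1 \<subseteq>\<^sub>m v" using u map_le_trans by blast
    thus False using comparable[OF ys(1) ys(2) _ v(2)] y(5,6) by blast
  qed
  have nvu: "\<not> v \<subseteq>\<^sub>m u"
  proof
    assume "v \<subseteq>\<^sub>m u" hence "y2 \<subseteq>\<^sub>m u" using v map_le_trans by blast
    thus False using comparable[OF ys(1) ys(2) u(2)] y(5,6) by blast
  qed
  note md = meet_derived[OF us nuv nvu]
  have ym: "y \<subseteq>\<^sub>m meet u v"
    using md(6)[OF ys(3)] y(7,8) u(2) v(2) map_le_trans by blast
  have sT: "meet u v \<in> seqs p" using meetT u v Tseq by auto
  have su: "meet u v \<subseteq>\<^sub>m u" "meet u v \<subseteq>\<^sub>m v" using md(1,2) by (auto simp: tless_def)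
  have "\<not> y1 \<subseteq>\<^sub>m meet u v"
  proof
    assume "y1 \<subseteq>\<^sub>m meet u v" hence "y1 \<subseteq>\<^sub>m v" using su map_le_trans by blast
    thus False using comparable[OF ys(1) ys(2) _ v(2)] y(5,6) by blast
  qed
  hence "tless (meet u v) y1" using comparable[OF sT ys(1) su(1) u(2)] unfolding tless_def by blast
  thus ?thesis using u v nuv nvu ym y by blast
qed

lemma core:
  fixes T :: "('o::wellorder) node set" and f :: "'o node \<Rightarrow> nat"
  assumes om: "uncountable (UNIV :: 'o set)" and segs: "\<forall>a::'o. countable {..<a}"
    and aron: "aronszajn p T" and XT: "X \<subseteq> T" and meetT: "\<forall>u\<in>X. \<forall>v\<in>X. meet u v \<in> T"
    and hf: "\<forall>x\<in>T. \<forall>y\<in>T. tless x y \<longrightarrow> f x \<noteq> f y"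
    and F: "finite F"
  shows "\<forall>y. y \<in> T \<and> uncountable {x\<in>X. y \<subseteq>\<^sub>m x} \<longrightarrow>
     (\<exists>u\<in>X. \<exists>v\<in>X. \<not> u \<subseteq>\<^sub>m v \<and> \<not> v \<subseteq>\<^sub>m u \<and> y \<subseteq>\<^sub>m meet u v \<and> f (meet u v) \<notin> F \<and>
           (\<exists>y1. y1 \<in> T \<and> uncountable {x\<in>X. y1 \<subseteq>\<^sub>m x} \<and> tless (meet u v) y1))"
  using F
proof (induction F rule: finite_induct)
  case empty
  show ?case
  proof (intro allI impI)
    fix y assume y: "y \<in> T \<and> uncountable {x\<in>X. y \<subseteq>\<^sub>m x}"
    obtain u v y1 where A: "u \<in> X" "v \<in> X" "\<not> u \<subseteq>\<^sub>m v" "\<not> v \<subseteq>\<^sub>m u" "y \<subseteq>\<^sub>m meet u v"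
       "y1 \<in> T" "uncountable {x\<in>X. y1 \<subseteq>\<^sub>m x}" "tless (meet u v) y1"
      using split_node[OF om segs aron XT meetT, of y] y by blast
    show "\<exists>u\<in>X. \<exists>v\<in>X. \<not> u \<subseteq>\<^sub>m v \<and> \<not> v \<subseteq>\<^sub>m u \<and> y \<subseteq>\<^sub>m meet u v \<and> f (meet u v) \<notin> {} \<and>
           (\<exists>y1. y1 \<in> T \<and> uncountable {x\<in>X. y1 \<subseteq>\<^sub>m x} \<and> tless (meet u v) y1)"
      apply (rule bexI[of _ u], rule bexI[of _ v])
      using A by auto
  qed
next
  case (insert a F)
  show ?case
  proof (intro allI impI)
    fix y assume y: "y \<in> T \<and> uncountable {x\<in>X. y \<subseteq>\<^sub>m x}"
    obtain u v y1 where A: "u \<in> X" "v \<in> X" "\<not> u \<subseteq>\<^sub>m v" "\<not> v \<subseteq>\<^sub>m u" "y \<subseteq>\<^sub>m meet u v" "f (meet u v) \<notin> F"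
       "y1 \<in> T" "uncountable {x\<in>X. y1 \<subseteq>\<^sub>m x}" "tless (meet u v) y1"
      using insert.IH[rule_format, OF y] by blast
    show "\<exists>u\<in>X. \<exists>v\<in>X. \<not> u \<subseteq>\<^sub>m v \<and> \<not> v \<subseteq>\<^sub>m u \<and> y \<subseteq>\<^sub>m meet u v \<and> f (meet u v) \<notin> insert a F \<and>
           (\<exists>y1. y1 \<in> T \<and> uncountable {x\<in>X. y1 \<subseteq>\<^sub>m x} \<and> tless (meet u v) y1)"
    proof (cases "f (meet u v) = a")
      case False show ?thesis
        apply (rule bexI[of _ u], rule bexI[of _ v])
        using A False by auto
    next
      case True
      obtain u' v' y1' where B: "u' \<in> X" "v' \<in> X" "\<not> u' \<subseteq>\<^sub>m v'" "\<not> v' \<subseteq>\<^sub>m u'" "y1 \<subseteq>\<^sub>m meet u' v'" "f (meet u' v') \<notin> F"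
         "y1' \<in> T" "uncountable {x\<in>X. y1' \<subseteq>\<^sub>m x}" "tless (meet u' v') y1'"
        using insert.IH[rule_format, of y1] A(7,8) by blast
      have l1: "meet u v \<subseteq>\<^sub>m y1" "meet u v \<noteq> y1" using A(9) by (auto simp: tless_def)
      have "meet u v \<subseteq>\<^sub>m meet u' v'" using l1(1) B(5) by (rule map_le_trans)
      moreover have "meet u v \<noteq> meet u' v'"
      proof
        assume "meet u v = meet u' v'"
        hence "y1 \<subseteq>\<^sub>m meet u v" using B(5) by simp
        hence "y1 = meet u v" using l1(1) by (simp add: map_le_antisym)
        thus False using l1(2) by simp
      qed
      ultimately have "tless (meet u v) (meet u' v')" unfolding tless_def by blast
      moreover have "meet u v \<in> T" "meet u' v' \<in> T" using meetT A B by auto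
      ultimately have "f (meet u' v') \<noteq> a" using hf True by blast
      moreover have "y \<subseteq>\<^sub>m meet u' v'" using A(5) l1(1) B(5) map_le_trans by blast
      ultimately show ?thesis
        apply -
        apply (rule bexI[of _ u'], rule bexI[of _ v'])
        using B by auto
    qed
  qed
qed


lemma tless_pair_unique:
  assumes "tless a b" "tless c d" "{a, b} = {c, d}"
  shows "a = c \<and> b = d"
proof -
  have "(a = c \<and> b = d) \<or> (a = d \<and> b = c)" using assms(3) by (auto simp: doubleton_eq_iff)
  moreover have "\<not> (a = d \<and> b = c)"
  proof
    assume "a = d \<and> b = c"
    hence "a \<subseteq>\<^sub>m b" "b \<subseteq>\<^sub>m a" "a \<noteq> b" using assms(1,2) by (auto simp: tless_def)
    thus False using map_le_antisym by blast
  qed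
  ultimately show ?thesis by blast
qed

theorem theorem3:
  fixes T :: "('o::wellorder) node set" and p :: nat
  assumes omega1_uncountable: "uncountable (UNIV :: 'o set)"
    and omega1_segments: "\<forall>a::'o. countable {..<a}"
    and cat: "CAT TYPE('o)"
    and p2: "p \<ge> 2"
    and aron: "aronszajn p T"
    and spec: "special T"
    and bin: "binarisable T"
  shows "\<exists>c :: 'o node set \<Rightarrow> nat.
           (\<forall>s\<in>T. \<forall>t\<in>T. tless s t \<longrightarrow> c {s, t} \<le> p) \<and>
           (\<forall>S. subtree T S \<longrightarrow>
              3 \<le> card {c {s, t} | s t. s \<in> S \<and> t \<in> S \<and> tless s t})"
proof -
  note om = omega1_uncountable and segs = omega1_segments
  have Tseq: "T \<subseteq> seqs p" and Tres: "\<forall>t\<in>T. \<forall>a. t |` {..<a} \<in> T" and Tunc: "uncountable T"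
    using aron unfolding aronszajn_def is_tree_def by auto
  obtain A :: "nat \<Rightarrow> 'o node set" where TA: "T = (\<Union>n. A n)" and AA: "\<forall>n. antichain (A n)"
    using spec unfolding special_def by blast
  define f where "f x = (LEAST n. x \<in> A n)" for x
  have fA: "x \<in> A (f x)" if xT: "x \<in> T" for x
  proof -
    obtain n where "x \<in> A n" using xT TA by auto
    thus ?thesis unfolding f_def by (rule LeastI)
  qed
  have hf: "\<forall>x\<in>T. \<forall>y\<in>T. tless x y \<longrightarrow> f x \<noteq> f y"
  proof (intro ballI impI notI)
    fix x y assume "x \<in> T" "y \<in> T" "tless x y" "f x = f y"
    hence "x \<in> A (f x)" "y \<in> A (f x)" using fA by metis+
    thus False using AA \<open>tless x y\<close> unfolding antichain_def by blast
  qed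
  have eT: "Map.empty \<in> T"
  proof -
    obtain t where t: "t \<in> T" using Tunc countable_empty by (metis ex_in_conv)
    define a0 where "a0 = (LEAST x::'o. True)"
    have "{..<a0} = {}"
    proof (rule ccontr)
      assume "{..<a0} \<noteq> {}"
      then obtain x where "x < a0" by auto
      moreover have "a0 \<le> x" unfolding a0_def by (rule Least_le) simp
      ultimately show False by simp
    qed
    hence "t |` {..<a0} = Map.empty" by simp
    thus ?thesis using Tres t by metis
  qed
  define col where "col s t = (if f s < f t then p else min p (the (t (lg s))))" for s t
  define c :: "'o node set \<Rightarrow> nat" where
    "c P = (if \<exists>s t. P = {s, t} \<and> tless s t
            then col (fst (SOME st. P = {fst st, snd st} \<and> tless (fst st) (snd st)))
                     (snd (SOME st. P = {fst st, snd st} \<and> tless (fst st) (snd st)))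
            else 0)" for P
  have cc: "c {s, t} = col s t" if st: "tless s t" for s t
  proof -
    define q where "q = (SOME st. {s, t} = {fst st, snd st} \<and> tless (fst st) (snd st))"
    have "\<exists>st. {s, t} = {fst st, snd st} \<and> tless (fst st) (snd st)"
      by (rule exI[of _ "(s, t)"]) (use st in simp)
    hence "{s, t} = {fst q, snd q} \<and> tless (fst q) (snd q)" unfolding q_def by (rule someI_ex)
    hence "s = fst q \<and> t = snd q" using tless_pair_unique st by blast
    moreover have "c {s, t} = col (fst q) (snd q)" unfolding c_def q_def using st by auto
    ultimately show ?thesis by simp
  qed
  have cbound: "c {s, t} \<le> p" if "tless s t" for s t
    using cc[OF that] unfolding col_def by auto
  have main: "3 \<le> card {c {s, t} | s t. s \<in> S \<and> t \<in> S \<and> tless s t}" if sub: "subtree T S" for S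
  proof -
    have ST: "S \<subseteq> T" and Sunc: "uncountable S" and Smeet: "\<forall>s\<in>S. \<forall>t\<in>S. meet s t \<in> S"
      using sub unfolding subtree_def by auto
    have "\<exists>n. uncountable {x\<in>S. f x = n}"
    proof (rule ccontr)
      assume "\<not> ?thesis"
      hence "countable (\<Union>n. {x\<in>S. f x = n})" by auto
      moreover have "S = (\<Union>n. {x\<in>S. f x = n})" by auto
      ultimately show False using Sunc by simp
    qed
    then obtain n where Xunc: "uncountable {x\<in>S. f x = n}" by blast
    define X where "X = {x\<in>S. f x = n}"
    have XT: "X \<subseteq> T" using ST X_def by auto
    have meetT: "\<forall>u\<in>X. \<forall>v\<in>X. meet u v \<in> T" using Smeet ST X_def by auto
    have meetS: "\<forall>u\<in>X. \<forall>v\<in>X. meet u v \<in> S" using Smeet X_def by auto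
    have econe: "{x\<in>X. Map.empty \<subseteq>\<^sub>m x} = X" by (auto simp: map_le_def)
    have eU: "Map.empty \<in> T \<and> uncountable {x\<in>X. Map.empty \<subseteq>\<^sub>m x}" using eT econe Xunc X_def by simp
    note cr = core[OF om segs aron XT meetT hf]
    obtain u v where uv: "u \<in> X" "v \<in> X" "\<not> u \<subseteq>\<^sub>m v" "\<not> v \<subseteq>\<^sub>m u" "f (meet u v) \<notin> {..n}"
      using cr[of "{..n}", rule_format, OF _ eU] by blast
    define s where "s = meet u v"
    have us: "u \<in> seqs p" "v \<in> seqs p" using uv XT Tseq by auto
    note md = meet_derived[OF us uv(3) uv(4)]
    have sS: "s \<in> S" using meetS uv s_def by auto
    have fu: "f u = n" "f v = n" using uv X_def by auto
    have fs: "n < f s" using uv(5) s_def by auto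
    obtain a where a: "u (lg s) = Some a" using md(3) s_def by auto
    obtain b where b: "v (lg s) = Some b" using md(4) s_def by auto
    have ab: "a \<noteq> b" using md(5) a b s_def by auto
    have ap: "a < p"
    proof -
      have "a \<in> ran u" using a by (auto simp: ran_def)
      thus ?thesis using us unfolding seqs_def by auto
    qed
    have bp: "b < p"
    proof -
      have "b \<in> ran v" using b by (auto simp: ran_def)
      thus ?thesis using us unfolding seqs_def by auto
    qed
    have ca: "c {s, u} = a" using cc[of s u] md(1) s_def fu fs a ap unfolding col_def by auto
    have cb: "c {s, v} = b" using cc[of s v] md(2) s_def fu fs b bp unfolding col_def by auto
    have uS: "u \<in> S" "v \<in> S" using uv X_def by auto
    obtain u1 v1 y1 where B1: "u1 \<in> X" "v1 \<in> X" "y1 \<in> T" "uncountable {x\<in>X. y1 \<subseteq>\<^sub>m x}"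
      "tless (meet u1 v1) y1"
      using cr[of "{}", rule_format, OF _ eU] by blast
    define s1 where "s1 = meet u1 v1"
    obtain u2 v2 where B2: "u2 \<in> X" "v2 \<in> X" "y1 \<subseteq>\<^sub>m meet u2 v2" "f (meet u2 v2) \<notin> {..f s1}"
      using cr[of "{..f s1}", rule_format, of y1] B1(3,4) by blast
    define s2 where "s2 = meet u2 v2"
    have s12S: "s1 \<in> S" "s2 \<in> S" using meetS B1 B2 s1_def s2_def by auto
    have l1: "s1 \<subseteq>\<^sub>m y1" "s1 \<noteq> y1" using B1(5) s1_def by (auto simp: tless_def)
    have "s1 \<subseteq>\<^sub>m s2" using l1(1) B2(3) s2_def map_le_trans by blast
    moreover have "s1 \<noteq> s2"
    proof
      assume "s1 = s2"
      hence "y1 \<subseteq>\<^sub>m s1" using B2(3) s2_def by simp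
      hence "y1 = s1" using l1(1) by (simp add: map_le_antisym)
      thus False using l1(2) by simp
    qed
    ultimately have t12: "tless s1 s2" unfolding tless_def by blast
    have "f s1 < f s2" using B2(4) s2_def by auto
    hence cp: "c {s1, s2} = p" using cc[OF t12] unfolding col_def by simp
    define Cs where "Cs = {c {s, t} | s t. s \<in> S \<and> t \<in> S \<and> tless s t}"
    have sub3: "{p, a, b} \<subseteq> Cs"
      unfolding Cs_def using ca cb cp md(1,2) s_def sS uS s12S t12 by blast
    have "Cs \<subseteq> {..p}" unfolding Cs_def using cbound by auto
    hence "finite Cs" using finite_subset by blast
    hence "card {p, a, b} \<le> card Cs" using sub3 card_mono by blast
    moreover have "card {p, a, b} = 3" using ab ap bp by auto
    ultimately show ?thesis unfolding Cs_def by simp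
  qed
  show ?thesis
    by (rule exI[of _ c]) (use cbound main in blast)
qed

end
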